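(* Let $n,r$ be positive integers, and let $M(n,r)$ be the maximum of $\mathcal{R}(\mathcal{F})=\Delta(\mathcal{F})/\delta(\mathcal{F})$ over all maximal intersecting families $\mathcal{F}\subseteq\binom{[n]}{r}$ with $\bigcup\mathcal{F}=[n]$. (i) For any values of $n$ and $r$, $M(n,r)\le n+r^r$. In particular, if $r<\frac{\log n}{\log\log n}$, then $M(n,r)\le(1+o(1))n$ (as $n\to\infty$). (ii) If $2r+2<n$, then \[ M(n,r)\ \ge\ n-2r+3-\frac{n-2r+2}{\binom{2r-3}{r-2}}. \] In particular, if $r=r(n)\to\infty$ and $r<\frac{\log n}{\log\log n}$, then $M(n,r)\sim n$ (i.e. $M(n,r)/n\to 1$ as $n\to\infty$).
   Context: $[n]=\{1,\dots,n\}$ and $\binom{[n]}{r}$ denotes the family of all $r$-element subsets of $[n]$. A family $\mathcal{F}$ of sets is intersecting if $F_1\cap F_2\neq\emptyset$ for all $F_1,F_2\in\mathcal{F}$. A family $\mathcal{F}\subseteq\binom{[n]}{r}$ is maximal intersecting if it is intersecting and for every $G\in\binom{[n]}{r}\setminus\mathcal{F}$ there is $F\in\mathcal{F}$ with $F\cap G=\emptyset$. For $x\in[n]$, the degree $d(x)$ is the number of sets of $\mathcal{F}$ containing $x$; $\Delta(\mathcal{F})$ and $\delta(\mathcal{F})$ are the maximum and minimum degree over $x\in[n]$. The condition $\bigcup\mathcal{F}=[n]$ guarantees $\delta(\mathcal{F})>0$. Asymptotic notation ($o(1)$, $\sim$) refers to $n\to\infty$ with $r=r(n)$. *)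

theory Defs
  imports Complex_Main
begin

definition intersecting :: "nat set set \<Rightarrow> bool" where
  "intersecting F \<longleftrightarrow> (\<forall>A\<in>F. \<forall>B\<in>F. A \<inter> B \<noteq> {})"

definition maximal_intersecting :: "nat \<Rightarrow> nat \<Rightarrow> nat set set \<Rightarrow> bool" where
  "maximal_intersecting n r F \<longleftrightarrow>
     F \<subseteq> {A. A \<subseteq> {1..n} \<and> card A = r} \<and> intersecting F \<and>
     (\<forall>G. G \<subseteq> {1..n} \<and> card G = r \<and> G \<notin> F \<longrightarrow> (\<exists>A\<in>F. A \<inter> G = {}))"

definition degree :: "nat set set \<Rightarrow> nat \<Rightarrow> nat" where
  "degree F x = card {A\<in>F. x \<in> A}"

definition max_degree :: "nat \<Rightarrow> nat set set \<Rightarrow> nat" where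
  "max_degree n F = Max (degree F ` {1..n})"

definition min_degree :: "nat \<Rightarrow> nat set set \<Rightarrow> nat" where
  "min_degree n F = Min (degree F ` {1..n})"

definition ratio :: "nat \<Rightarrow> nat set set \<Rightarrow> real" where
  "ratio n F = real (max_degree n F) / real (min_degree n F)"

definition admissible :: "nat \<Rightarrow> nat \<Rightarrow> nat set set set" where
  "admissible n r = {F. maximal_intersecting n r F \<and> \<Union>F = {1..n}}"

definition M :: "nat \<Rightarrow> nat \<Rightarrow> real" where
  "M n r = Max (ratio n ` admissible n r)"

end

theory Submission
  imports Defs "HOL-Real_Asymp.Real_Asymp"
begin


definition transv :: "'a set set \<Rightarrow> 'a set \<Rightarrow> bool" where
  "transv F T \<longleftrightarrow> (\<forall>A\<in>F. A \<inter> T \<noteq> {})"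

definition mintransv :: "'a set set \<Rightarrow> 'a set \<Rightarrow> bool" where
  "mintransv F T \<longleftrightarrow> transv F T \<and> (\<forall>T'. T' \<subset> T \<longrightarrow> \<not> transv F T')"

lemma mt_count:
  fixes F :: "'a set set"
  assumes U: "finite U" and FA: "\<forall>A\<in>F. card A \<le> r \<and> A \<subseteq> U"
  shows "card {T. T \<subseteq> U \<and> P \<subseteq> T \<and> card T = card P + k \<and> mintransv F T} \<le> r ^ k"
  using assms(1)
proof (induction k arbitrary: P)
  case 0
  show ?case
  proof (cases "transv F P")
    case True
    have "{T. T \<subseteq> U \<and> P \<subseteq> T \<and> card T = card P + 0 \<and> mintransv F T} \<subseteq> {P}"
    proof
      fix T assume "T \<in> {T. T \<subseteq> U \<and> P \<subseteq> T \<and> card T = card P + 0 \<and> mintransv F T}"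
      then have T: "P \<subseteq> T" "mintransv F T" by auto
      show "T \<in> {P}"
      proof (rule ccontr)
        assume "T \<notin> {P}"
        then have "P \<subset> T" using T(1) by auto
        then show False using T(2) True unfolding mintransv_def by blast
      qed
    qed
    then have "card {T. T \<subseteq> U \<and> P \<subseteq> T \<and> card T = card P + 0 \<and> mintransv F T} \<le> card {P}" by (rule card_mono[rotated]) simp
    then show ?thesis by simp
  next
    case False
    have "{T. T \<subseteq> U \<and> P \<subseteq> T \<and> card T = card P + 0 \<and> mintransv F T} = {}"
    proof (rule ccontr)
      assume "\<not> ?thesis"
      then obtain T where T: "T \<subseteq> U" "P \<subseteq> T" "card T = card P" "mintransv F T" by auto
      have "finite T" using T(1) U by (rule finite_subset)
      then have "T = P" using T card_subset_eq by metis
      then show False using T(4) False unfolding mintransv_def by simp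
    qed
    then show ?thesis by (metis card.empty le0)
  qed
next
  case (Suc k)
  show ?case
  proof (cases "transv F P")
    case True
    have "{T. T \<subseteq> U \<and> P \<subseteq> T \<and> card T = card P + Suc k \<and> mintransv F T} = {}"
    proof (rule ccontr)
      assume "\<not> ?thesis"
      then obtain T where T: "T \<subseteq> U" "P \<subseteq> T" "card T = card P + Suc k" "mintransv F T" by auto
      have "T \<noteq> P" using T(3) by auto
      then have "P \<subset> T" using T(2) by auto
      then show False using T(4) True unfolding mintransv_def by blast
    qed
    then show ?thesis by (metis card.empty le0)
  next
    case False
    then obtain S where S: "S \<in> F" "S \<inter> P = {}" unfolding transv_def by auto
    have "S \<subseteq> U" using S FA by blast
    then have Sf: "finite S" using U by (rule finite_subset)
    have Sr: "card S \<le> r" using S FA by auto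
    let ?X = "\<lambda>Q. {T. T \<subseteq> U \<and> Q \<subseteq> T \<and> card T = card Q + k \<and> mintransv F T}"
    have sub: "{T. T \<subseteq> U \<and> P \<subseteq> T \<and> card T = card P + Suc k \<and> mintransv F T} \<subseteq> (\<Union>a\<in>S. ?X (insert a P))"
    proof
      fix T assume "T \<in> {T. T \<subseteq> U \<and> P \<subseteq> T \<and> card T = card P + Suc k \<and> mintransv F T}"
      then have T: "T \<subseteq> U" "P \<subseteq> T" "card T = card P + Suc k" "mintransv F T" by auto
      have "transv F T" using T(4) unfolding mintransv_def by blast
      then have "S \<inter> T \<noteq> {}" using S(1) unfolding transv_def by blast
      then obtain a where a: "a \<in> S" "a \<in> T" by blast
      have "P \<subseteq> U" using T(1,2) by blast
      then have "finite P" using U by (rule finite_subset)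
      moreover have "a \<notin> P" using a S(2) by auto
      ultimately have "card (insert a P) = card P + 1" by simp
      then have "T \<in> ?X (insert a P)" using T(1,3,4) T(2) a(2) by simp
      then show "T \<in> (\<Union>a\<in>S. ?X (insert a P))" using a by auto
    qed
    have "card {T. T \<subseteq> U \<and> P \<subseteq> T \<and> card T = card P + Suc k \<and> mintransv F T} \<le> card (\<Union>a\<in>S. ?X (insert a P))"
    proof (rule card_mono[OF _ sub])
      show "finite (\<Union>a\<in>S. ?X (insert a P))" by (rule finite_subset[of _ "Pow U"]) (auto simp: U)
    qed
    also have "\<dots> \<le> (\<Sum>a\<in>S. card (?X (insert a P)))" by (rule card_UN_le[OF Sf])
    also have "\<dots> \<le> (\<Sum>a\<in>S. r ^ k)" by (rule sum_mono) (rule Suc.IH[OF U])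
    also have "\<dots> = card S * r ^ k" by simp
    also have "\<dots> \<le> r ^ Suc k" using Sr by (simp add: mult_right_mono)
    finally show ?thesis .
  qed
qed



lemma adm_sub: "F \<in> admissible n r \<Longrightarrow> F \<subseteq> Pow {1..n}"
  unfolding admissible_def maximal_intersecting_def by auto

lemma adm_fin: "F \<in> admissible n r \<Longrightarrow> finite F"
  by (rule finite_subset[OF adm_sub]) simp_all

lemma deg_pos:
  assumes "F \<in> admissible n r" "y \<in> {1..n}" shows "degree F y \<ge> 1"
proof -
  have "y \<in> \<Union>F" using assms unfolding admissible_def by auto
  then obtain A where "A \<in> F" "y \<in> A" by auto
  moreover have "finite {A\<in>F. y \<in> A}" using adm_fin[OF assms(1)] by simp
  ultimately have "card {A\<in>F. y \<in> A} \<noteq> 0" by auto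
  then show ?thesis unfolding degree_def by simp
qed

lemma upper_card:
  assumes n: "0 < n" and r: "0 < r" and F: "F \<in> admissible n r" and x: "x \<in> {1..n}"
  shows "card F \<le> (n - r + 1) * degree F x + r ^ r"
proof -
  have mi: "maximal_intersecting n r F" using F unfolding admissible_def by auto
  have Fsub: "\<And>A. A \<in> F \<Longrightarrow> A \<subseteq> {1..n} \<and> card A = r" using mi unfolding maximal_intersecting_def by auto
  have inter: "intersecting F" using mi unfolding maximal_intersecting_def by auto
  have maxm: "\<And>G. G \<subseteq> {1..n} \<Longrightarrow> card G = r \<Longrightarrow> G \<notin> F \<Longrightarrow> \<exists>A\<in>F. A \<inter> G = {}"
    using mi unfolding maximal_intersecting_def by auto
  have finF: "finite F" using adm_fin[OF F] .
  define Fx where "Fx = {A\<in>F. x \<in> A}"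
  define F1 where "F1 = {A\<in>F. x \<notin> A \<and> \<not> mintransv F A}"
  define F2 where "F2 = {T. T \<subseteq> {1..n} \<and> {} \<subseteq> T \<and> card T = card ({}::nat set) + r \<and> mintransv F T}"
  have cover: "F \<subseteq> Fx \<union> F1 \<union> F2" unfolding Fx_def F1_def F2_def using Fsub by auto
  have c2: "card F2 \<le> r ^ r" unfolding F2_def
    by (rule mt_count) (use Fsub in auto)
  define g where "g = (\<lambda>(A'::nat set, a::nat). insert a (A' - {x}))"
  have sub1: "F1 \<subseteq> g ` (SIGMA A':Fx. {1..n} - A')"
  proof
    fix A assume A: "A \<in> F1"
    then have AF: "A \<in> F" and xA: "x \<notin> A" and nm: "\<not> mintransv F A" unfolding F1_def by auto
    have tA: "transv F A" using inter AF unfolding intersecting_def transv_def by blast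
    then obtain B where B: "B \<subset> A" "transv F B" using nm unfolding mintransv_def by auto
    then obtain a where a: "a \<in> A" "a \<notin> B" by auto
    define A' where "A' = insert x (A - {a})"
    have Afin: "finite A" using finite_subset[of A "{1..n}"] Fsub[OF AF] by simp
    have cA': "card A' = r" unfolding A'_def using Fsub[OF AF] Afin a xA r by auto
    have sA': "A' \<subseteq> {1..n}" unfolding A'_def using Fsub[OF AF] x by auto
    have "A' \<in> F"
    proof (rule ccontr)
      assume "A' \<notin> F"
      then obtain C where C: "C \<in> F" "C \<inter> A' = {}" using maxm[OF sA' cA'] by auto
      have "B \<subseteq> A'" unfolding A'_def using B a by auto
      then show False using B(2) C unfolding transv_def by auto
    qed
    then have "A' \<in> Fx" unfolding Fx_def A'_def by auto
    moreover have "a \<in> {1..n} - A'" using a Fsub[OF AF] xA unfolding A'_def by auto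
    moreover have "g (A', a) = A" unfolding g_def A'_def using a xA by auto
    ultimately show "A \<in> g ` (SIGMA A':Fx. {1..n} - A')" by force
  qed
  have finFx: "finite Fx" unfolding Fx_def using finF by simp
  have finS: "finite (SIGMA A':Fx. {1..n} - A')" using finFx by auto
  have "card F1 \<le> card (g ` (SIGMA A':Fx. {1..n} - A'))"
    by (rule card_mono[OF _ sub1]) (use finS in simp)
  also have "\<dots> \<le> card (SIGMA A':Fx. {1..n} - A')" by (rule card_image_le[OF finS])
  also have "\<dots> = (\<Sum>A'\<in>Fx. card ({1..n} - A'))" using finFx by simp
  also have "\<dots> = (\<Sum>A'\<in>Fx. n - r)"
  proof (rule sum.cong)
    fix A' assume "A' \<in> Fx"
    then have "A' \<subseteq> {1..n}" "card A' = r" using Fsub unfolding Fx_def by auto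
    then show "card ({1..n} - A') = n - r" using finite_subset[of A' "{1..n}"] by (simp add: card_Diff_subset)
  qed simp
  also have "\<dots> = card Fx * (n - r)" by simp
  finally have c1: "card F1 \<le> card Fx * (n - r)" .
  have fin2: "finite F2" unfolding F2_def by (rule finite_subset[of _ "Pow {1..n}"]) auto
  have fin1: "finite F1" unfolding F1_def using finF by simp
  have "card F \<le> card (Fx \<union> F1 \<union> F2)"
    by (rule card_mono[OF _ cover]) (use finFx fin1 fin2 in simp)
  also have "\<dots> \<le> card Fx + card F1 + card F2"
    using card_Un_le[of "Fx \<union> F1" F2] card_Un_le[of Fx F1] by simp
  also have "\<dots> \<le> card Fx + card Fx * (n - r) + r ^ r" using c1 c2 by simp
  also have "\<dots> = (n - r + 1) * degree F x + r ^ r" unfolding degree_def Fx_def by (simp add: algebra_simps)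
  finally show ?thesis .
qed

lemma upper_ratio:
  assumes n: "0 < n" and r: "0 < r" and F: "F \<in> admissible n r"
  shows "ratio n F \<le> real n + real r ^ r"
proof -
  have ne: "degree F ` {1..n} \<noteq> {}" using n by auto
  have fi: "finite (degree F ` {1..n})" by simp
  obtain x where x: "x \<in> {1..n}" "min_degree n F = degree F x"
    using Min_in[OF fi ne] unfolding min_degree_def by auto
  obtain y where y: "y \<in> {1..n}" "max_degree n F = degree F y"
    using Max_in[OF fi ne] unfolding max_degree_def by auto
  have d1: "degree F x \<ge> 1" using deg_pos[OF F x(1)] .
  have "degree F y \<le> card F" unfolding degree_def by (rule card_mono[OF adm_fin[OF F]]) auto
  also have "\<dots> \<le> (n - r + 1) * degree F x + r ^ r" by (rule upper_card[OF n r F x(1)])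
  also have "\<dots> \<le> n * degree F x + r ^ r * degree F x"
  proof -
    have "{A\<in>F. x \<in> A} \<noteq> {}" using d1 unfolding degree_def by (metis card.empty not_one_le_zero)
    then obtain A where "A \<in> F" by auto
    then have "A \<subseteq> {1..n}" "card A = r" using F unfolding admissible_def maximal_intersecting_def by auto
    then have "r \<le> n" by (metis card_atLeastAtMost card_mono diff_Suc_1 finite_atLeastAtMost)
    then have "(n - r + 1) * degree F x \<le> n * degree F x" using r by (intro mult_right_mono) auto
    moreover have "r ^ r \<le> r ^ r * degree F x" using d1 by simp
    ultimately show ?thesis by linarith
  qed
  finally have le: "max_degree n F \<le> (n + r ^ r) * min_degree n F" using x y by (simp add: algebra_simps)
  have pos: "real (min_degree n F) > 0" using d1 x by simp
  have "real (max_degree n F) \<le> (real n + real r ^ r) * real (min_degree n F)"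
    using le by (metis of_nat_add of_nat_le_iff of_nat_mult of_nat_power)
  then show ?thesis unfolding ratio_def pos_divide_le_eq[OF pos] .
qed



lemma card_disj_le: "finite Z \<Longrightarrow> X \<subseteq> Z \<Longrightarrow> Y \<subseteq> Z \<Longrightarrow> X \<inter> Y = {} \<Longrightarrow> card X + card Y \<le> card Z"
proof -
  assume a: "finite Z" "X \<subseteq> Z" "Y \<subseteq> Z" "X \<inter> Y = {}"
  then have "finite X" "finite Y" using finite_subset[of X Z] finite_subset[of Y Z] by auto
  then have "card X + card Y = card (X \<union> Y)" using a(4) by (simp add: card_Un_disjoint)
  also have "\<dots> \<le> card Z" using a by (intro card_mono) auto
  finally show ?thesis .
qed

lemma construction:
  assumes r: "2 \<le> r" and n: "2 * r + 2 < n"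
  shows "\<exists>F\<in>admissible n r. ratio n F \<ge> real n - 2 * real r + 3"
proof -
  define K where "K = {1..2*r-2}"
  define F0 where "F0 = {A. A \<subseteq> {1..n} \<and> card A = r \<and> ((1 \<in> A \<and> card (A - K) \<le> 1) \<or> A \<subseteq> K - {1})}"
  have finK: "finite K" unfolding K_def by simp
  have cK: "card K = 2*r-2" unfolding K_def by simp
  have K1: "1 \<in> K" unfolding K_def using r by auto
  have cK1: "card (K - {1}) = 2*r-3" using cK K1 finK by simp
  have Kn: "K \<subseteq> {1..n}" unfolding K_def using n by auto
  have finK1: "finite (K - {1})" using finK by simp
  have big: "card (A \<inter> (K - {1})) + 2 \<ge> r" if "A \<in> F0" "1 \<in> A" "card (A - K) \<le> 1" for A
  proof -
    have "A \<subseteq> (A \<inter> (K - {1})) \<union> (A - K) \<union> {1}" by auto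
    moreover have finA: "finite A" using that(1) finite_subset[of A "{1..n}"] unfolding F0_def by auto
    ultimately have "card A \<le> card ((A \<inter> (K - {1})) \<union> (A - K) \<union> {1})"
      by (intro card_mono) auto
    also have "\<dots> \<le> card (A \<inter> (K - {1})) + card (A - K) + 1"
      using card_Un_le[of "(A \<inter> (K - {1})) \<union> (A - K)" "{1}"] card_Un_le[of "A \<inter> (K - {1})" "A - K"] by simp
    finally show ?thesis using that unfolding F0_def by auto
  qed
  have inter: "intersecting F0"
    unfolding intersecting_def
  proof (intro ballI notI)
    fix A B assume A: "A \<in> F0" and B: "B \<in> F0" and dis: "A \<inter> B = {}"
    have cA: "card A = r" "card B = r" using A B unfolding F0_def by auto
    show False
    proof (cases "1 \<in> A")
      case True
      then have Ac: "card (A - K) \<le> 1" using A K1 unfolding F0_def by auto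
      have "1 \<notin> B" using True dis by auto
      then have BK: "B \<subseteq> K - {1}" using B unfolding F0_def by auto
      have "card (A \<inter> (K - {1})) + card B \<le> card (K - {1})"
        by (rule card_disj_le[OF finK1]) (use BK dis in auto)
      then show False using big[OF A True Ac] cA cK1 r by linarith
    next
      case False
      then have AK: "A \<subseteq> K - {1}" using A unfolding F0_def by auto
      show False
      proof (cases "1 \<in> B")
        case True
        then have Bc: "card (B - K) \<le> 1" using B K1 unfolding F0_def by auto
        have "card (B \<inter> (K - {1})) + card A \<le> card (K - {1})"
          by (rule card_disj_le[OF finK1]) (use AK dis in auto)
        then show False using big[OF B True Bc] cA cK1 r by linarith
      next
        case False
        then have BK: "B \<subseteq> K - {1}" using B unfolding F0_def by auto
        have "card A + card B \<le> card (K - {1})" by (rule card_disj_le[OF finK1 AK BK dis])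
        then show False using cA cK1 r by linarith
      qed
    qed
  qed
  have maxm: "\<exists>A\<in>F0. A \<inter> G = {}" if G: "G \<subseteq> {1..n}" "card G = r" "G \<notin> F0" for G
  proof (cases "1 \<in> G")
    case True
    have finG: "finite G" using G(1) finite_subset[of G "{1..n}"] by auto
    have GK: "card (G - K) \<ge> 2" using G True unfolding F0_def by auto
    have c1: "card (G \<inter> (K - {1})) + card (insert 1 (G - K)) \<le> card G"
      by (rule card_disj_le[OF finG]) (use True in auto)
    have "card (insert 1 (G - K)) = 1 + card (G - K)" using finG K1 by simp
    then have c: "card (G \<inter> (K - {1})) + 3 \<le> r" using c1 G(2) GK by linarith
    have "card (K - {1}) \<le> card (((K - {1}) - G) \<union> ((K - {1}) \<inter> G))" using finK1 by (intro card_mono) auto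
    also have "\<dots> \<le> card ((K - {1}) - G) + card ((K - {1}) \<inter> G)" by (rule card_Un_le)
    finally have "card ((K - {1}) - G) \<ge> r" using c cK1 by (simp add: Int_commute)
    then obtain A where A: "A \<subseteq> (K - {1}) - G" "card A = r" by (meson obtain_subset_with_card_n)
    have "A \<in> F0" unfolding F0_def using A Kn by auto
    then show ?thesis using A by auto
  next
    case False
    have finG: "finite G" using G(1) finite_subset[of G "{1..n}"] by auto
    have "\<not> G \<subseteq> K - {1}" using G unfolding F0_def by auto
    then have "G \<inter> (K - {1}) \<subset> G" by auto
    then have c: "card (G \<inter> (K - {1})) < r" using G(2) psubset_card_mono[OF finG] by auto
    have "card (K - {1}) \<le> card (((K - {1}) - G) \<union> ((K - {1}) \<inter> G))" using finK1 by (intro card_mono) auto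
    also have "\<dots> \<le> card ((K - {1}) - G) + card ((K - {1}) \<inter> G)" by (rule card_Un_le)
    finally have "card ((K - {1}) - G) \<ge> r - 2" using c cK1 by (simp add: Int_commute)
    then obtain S where S: "S \<subseteq> (K - {1}) - G" "card S = r - 2" by (meson obtain_subset_with_card_n)
    have finS: "finite S" using S finK1 finite_subset[of S "K - {1}"] by auto
    have "card (G \<union> S \<union> {1}) \<le> card G + card S + 1"
      using card_Un_le[of "G \<union> S" "{1}"] card_Un_le[of G S] by simp
    then have "card (G \<union> S \<union> {1}) < card {1..n}" using G(2) S(2) n r by simp
    then have "\<not> {1..n} \<subseteq> G \<union> S \<union> {1}"
      using finG finS card_mono[of "G \<union> S \<union> {1}" "{1..n}"] by auto
    then obtain z where z: "z \<in> {1..n}" "z \<notin> G" "z \<notin> S" "z \<noteq> 1" by blast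
    define A where "A = insert 1 (insert z S)"
    have "1 \<notin> S" "z \<notin> S" using S z by auto
    then have "card A = r" unfolding A_def using finS z r S(2) by simp
    moreover have "A \<subseteq> {1..n}" unfolding A_def using z S Kn K1 by auto
    moreover have "card (A - K) \<le> 1"
    proof -
      have "A - K \<subseteq> {z}" unfolding A_def using S K1 by auto
      then show ?thesis using card_mono[of "{_}"] by fastforce
    qed
    ultimately have "A \<in> F0" unfolding F0_def A_def by auto
    moreover have "A \<inter> G = {}" unfolding A_def using False z S by auto
    ultimately show ?thesis by auto
  qed
  have union: "\<Union>F0 = {1..n}"
  proof
    show "\<Union>F0 \<subseteq> {1..n}" unfolding F0_def by auto
  next
    show "{1..n} \<subseteq> \<Union>F0"
    proof
      fix y assume y: "y \<in> {1..n}"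
      show "y \<in> \<Union>F0"
      proof (cases "y = 1")
        case True
        have e: "{1..r} - K = {}" unfolding K_def using r by auto
        have e2: "card ({1..r} - K) \<le> 1" unfolding e by simp
        have "{1..r} \<subseteq> {1..n}" using n by auto
        then have "{1..r} \<in> F0" unfolding F0_def using r e2 by simp
        then show ?thesis using True r by (intro UnionI[of "{1..r}"]) auto
      next
        case False
        have "card (K - {1} - {y}) \<ge> card (K - {1}) - 1"
          using card_Diff_singleton_if[of "K - {1}" y] finK1 by (auto split: if_splits)
        then have "card (K - {1} - {y}) \<ge> r - 2" using cK1 r by linarith
        then obtain S where S: "S \<subseteq> K - {1} - {y}" "card S = r - 2" by (meson obtain_subset_with_card_n)
        have finS: "finite S" using S finK1 finite_subset[of S "K - {1}"] by auto
        define A where "A = insert 1 (insert y S)"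
        have "1 \<notin> S" "y \<notin> S" using S by auto
        then have "card A = r" unfolding A_def using finS False r S(2) by simp
        moreover have "A \<subseteq> {1..n}" unfolding A_def using y S Kn K1 by auto
        moreover have "card (A - K) \<le> 1"
        proof -
          have "A - K \<subseteq> {y}" unfolding A_def using S K1 by auto
          then show ?thesis using card_mono[of "{_}"] by fastforce
        qed
        ultimately have "A \<in> F0" unfolding F0_def A_def by auto
        then show ?thesis unfolding A_def by (rule UnionI) simp
      qed
    qed
  qed
  have adm: "F0 \<in> admissible n r"
    unfolding admissible_def maximal_intersecting_def using inter maxm union
    unfolding F0_def by auto
  define D where "D = {B. B \<subseteq> K \<and> card B = r - 1 \<and> 1 \<in> B}"
  define E where "E = {A. A \<subseteq> K \<and> card A = r \<and> 1 \<in> A}"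
  have finD: "finite D" unfolding D_def using finK by simp
  have finE: "finite E" unfolding E_def using finK by simp
  have degz: "{A\<in>F0. z \<in> A} = insert z ` D" if z: "z \<in> {1..n} - K" for z
  proof
    show "{A\<in>F0. z \<in> A} \<subseteq> insert z ` D"
    proof
      fix A assume A: "A \<in> {A\<in>F0. z \<in> A}"
      then have A1: "A \<subseteq> {1..n}" "card A = r" "z \<in> A" unfolding F0_def by auto
      have "\<not> A \<subseteq> K - {1}" using A1 z by auto
      then have "1 \<in> A" "card (A - K) \<le> 1" using A unfolding F0_def by auto
      moreover have "z \<in> A - K" using A1 z by auto
      moreover have finAK: "finite (A - K)" using A1 finite_subset[of "A - K" "{1..n}"] by auto
      ultimately have "A - K = {z}"
        using card_le_Suc0_iff_eq[OF finAK] by auto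
      then have "A - {z} \<subseteq> K" by auto
      moreover have "card (A - {z}) = r - 1" using A1 finite_subset[of A "{1..n}"] by simp
      moreover have "1 \<in> A - {z}" using \<open>1 \<in> A\<close> z K1 by auto
      ultimately have "A - {z} \<in> D" unfolding D_def by auto
      moreover have "A = insert z (A - {z})" using A1 by auto
      ultimately show "A \<in> insert z ` D" by blast
    qed
  next
    show "insert z ` D \<subseteq> {A\<in>F0. z \<in> A}"
    proof
      fix A assume "A \<in> insert z ` D"
      then obtain B where B: "B \<in> D" "A = insert z B" by auto
      have BK: "B \<subseteq> K" "card B = r - 1" "1 \<in> B" using B unfolding D_def by auto
      have finB: "finite B" using BK finK finite_subset[of B K] by auto
      have zB: "z \<notin> B" using BK z by auto
      have "card A = r" using B(2) finB zB BK r by simp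
      moreover have "A \<subseteq> {1..n}" using B(2) BK Kn z by auto
      moreover have "A - K \<subseteq> {z}" using B(2) BK by auto
      then have "card (A - K) \<le> 1" using card_mono[of "{_}"] by fastforce
      ultimately show "A \<in> {A\<in>F0. z \<in> A}" unfolding F0_def using B(2) BK by auto
    qed
  qed
  have cdegz: "degree F0 z = card D" if z: "z \<in> {1..n} - K" for z
  proof -
    have "inj_on (insert z) D" unfolding inj_on_def D_def using z by auto
    then show ?thesis unfolding degree_def degz[OF z] by (simp add: card_image)
  qed
  have nK: "n \<in> {1..n} - K" unfolding K_def using n by auto
  have ED: "card D \<le> card E"
  proof -
    define h where "h = (\<lambda>B. insert 1 (K - B))"
    have "inj_on h D"
    proof
      fix B B' assume B: "B \<in> D" "B' \<in> D" and eq: "h B = h B'"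
      have "K - B = h B - {1}" using B unfolding h_def D_def by auto
      moreover have "K - B' = h B' - {1}" using B unfolding h_def D_def by auto
      ultimately have "K - B = K - B'" using eq by simp
      then show "B = B'" using B unfolding D_def by auto
    qed
    moreover have "h ` D \<subseteq> E"
    proof
      fix A assume "A \<in> h ` D"
      then obtain B where B: "B \<in> D" "A = h B" by auto
      have BK: "B \<subseteq> K" "card B = r - 1" "1 \<in> B" using B unfolding D_def by auto
      have "card (K - B) = r - 1" using BK cK finK finite_subset[of B K] by (simp add: card_Diff_subset)
      then have "card A = r" using B(2) BK finK r unfolding h_def by simp
      then show "A \<in> E" unfolding E_def using B(2) BK K1 unfolding h_def by auto
    qed
    ultimately show ?thesis by (rule card_inj_on_le[OF _ _ finE])
  qed
  let ?U = "(\<Union>z\<in>{1..n} - K. insert z ` D)"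
  have "card ?U = (\<Sum>z\<in>{1..n} - K. card (insert z ` D))"
  proof (rule card_UN_disjoint)
    show "\<forall>i\<in>{1..n} - K. \<forall>j\<in>{1..n} - K. i \<noteq> j \<longrightarrow> insert i ` D \<inter> insert j ` D = {}"
      unfolding D_def by auto
  qed (use finD in auto)
  also have "\<dots> = (\<Sum>z\<in>{1..n} - K. card D)"
    by (rule sum.cong) (use degz cdegz in \<open>auto simp: degree_def\<close>)
  also have "\<dots> = (n - (2*r-2)) * card D" using Kn cK finK by (simp add: card_Diff_subset)
  finally have cU: "card ?U = (n - (2*r-2)) * card D" .
  have "?U \<inter> E = {}" unfolding E_def D_def by auto
  moreover have "?U \<union> E \<subseteq> {A\<in>F0. 1 \<in> A}"
  proof -
    have "?U \<subseteq> {A\<in>F0. 1 \<in> A}" using degz unfolding D_def by blast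
    moreover have "E \<subseteq> {A\<in>F0. 1 \<in> A}"
    proof
      fix A assume "A \<in> E"
      then have A: "A \<subseteq> K" "card A = r" "1 \<in> A" unfolding E_def by auto
      have e: "A - K = {}" using A by auto
      have "card (A - K) \<le> 1" unfolding e by simp
      then show "A \<in> {A\<in>F0. 1 \<in> A}" unfolding F0_def using A Kn by auto
    qed
    ultimately show ?thesis by auto
  qed
  moreover have "finite {A\<in>F0. 1 \<in> A}" using adm_fin[OF adm] by simp
  ultimately have "card ?U + card E \<le> degree F0 1" unfolding degree_def
    by (intro card_disj_le) auto
  then have d1: "(n - (2*r-2) + 1) * card D \<le> degree F0 1" using cU ED by simp
  have ne: "degree F0 ` {1..n} \<noteq> {}" using n by auto
  have fi: "finite (degree F0 ` {1..n})" by simp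
  have mx: "degree F0 1 \<le> max_degree n F0" unfolding max_degree_def using n by (intro Max_ge) auto
  have "degree F0 n \<in> degree F0 ` {1..n}" using n by auto
  then have "Min (degree F0 ` {1..n}) \<le> degree F0 n" by (rule Min_le[OF fi])
  then have mn: "min_degree n F0 \<le> card D" unfolding min_degree_def using cdegz[OF nK] by simp
  obtain x where x: "x \<in> {1..n}" "min_degree n F0 = degree F0 x"
    using Min_in[OF fi ne] unfolding min_degree_def by auto
  have mpos: "min_degree n F0 \<ge> 1" using deg_pos[OF adm x(1)] x by simp
  have "real (n - (2*r-2) + 1) * real (min_degree n F0) \<le> real (n - (2*r-2) + 1) * real (card D)"
    using mn by (intro mult_left_mono) auto
  also have "\<dots> \<le> real (max_degree n F0)"
  proof -
    have "(n - (2*r-2) + 1) * card D \<le> max_degree n F0" using d1 mx by linarith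
    then show ?thesis by (simp only: of_nat_mult[symmetric] of_nat_le_iff)
  qed
  finally have "real (n - (2*r-2) + 1) \<le> ratio n F0" unfolding ratio_def using mpos
    by (simp add: le_divide_eq)
  moreover have "real (n - (2*r-2) + 1) = real n - 2 * real r + 3" using n r by (simp add: of_nat_diff)
  ultimately have "real n - 2 * real r + 3 \<le> ratio n F0" by linarith
  then show ?thesis using adm by blast
qed



definition ee :: "real \<Rightarrow> real" where
  "ee x = exp (- (ln x * ln (ln (ln x)) / ln (ln x)))"

lemma ee_lim: "(ee \<longlongrightarrow> 0) at_top"
  unfolding ee_def by real_asymp

lemma ev1: "\<forall>\<^sub>F x in at_top. (1::real) < ln (ln x)"
  by real_asymp

lemma ev2: "\<forall>\<^sub>F x in at_top. 2 * ln x + 2 < (x::real)"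
  by real_asymp

lemma lim_low: "((\<lambda>x. 1 - 2 * ln x / x) \<longlongrightarrow> (1::real)) at_top"
  by real_asymp

lemma rpow_bound:
  fixes x :: real and r :: nat
  assumes x1: "1 < x" and x: "1 < ln (ln x)" and r1: "1 \<le> real r" and rs: "real r < ln x / ln (ln x)"
  shows "real r ^ r \<le> x * ee x"
proof -
  define L where "L = ln x"
  define LL where "LL = ln L"
  have LL1: "1 < LL" using x unfolding L_def LL_def by simp
  have L0: "0 < L" unfolding L_def using x1 by (rule ln_gt_zero)
  have x0: "0 < x" using x1 by simp
  define s where "s = L / LL"
  have s0: "0 < s" unfolding s_def using L0 LL1 by simp
  have rs': "real r \<le> s" using rs unfolding s_def L_def LL_def by simp
  have lnr: "0 \<le> ln (real r)" using r1 by simp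
  have "ln (real r) \<le> ln s" using rs' r1 s0 by simp
  then have m: "real r * ln (real r) \<le> s * ln s"
    using rs' lnr r1 by (intro mult_mono) auto
  have "ln s = LL - ln LL" unfolding s_def using L0 LL1 by (simp add: ln_div LL_def)
  then have "s * ln s = (L / LL) * (LL - ln LL)" unfolding s_def by simp
  also have "\<dots> = L - L * ln LL / LL" using LL1 by (simp add: field_simps)
  finally have "s * ln s = L - L * ln LL / LL" .
  with m have m2: "real r * ln (real r) \<le> L - L * ln LL / LL" by simp
  have "real r ^ r = exp (real r * ln (real r))"
    using r1 powr_realpow[of "real r" r] by (simp add: powr_def mult.commute)
  also have "\<dots> \<le> exp (L - L * ln LL / LL)" using m2 by simp
  also have "\<dots> = exp L * exp (- (L * ln LL / LL))" by (simp add: exp_diff exp_minus field_simps)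
  also have "\<dots> = x * ee x" unfolding ee_def L_def LL_def using x0 by simp
  finally show ?thesis .
qed

lemma adm_finite: "finite (admissible n r)"
proof -
  have "admissible n r \<subseteq> Pow (Pow {1..n})" using adm_sub by blast
  then show ?thesis by (rule finite_subset) simp
qed

lemma M_ge:
  assumes "2 \<le> r" "2 * r + 2 < n"
  shows "M n r \<ge> real n - 2 * real r + 3"
proof -
  obtain F where F: "F \<in> admissible n r" "ratio n F \<ge> real n - 2 * real r + 3"
    using construction[OF assms] by blast
  have "ratio n F \<le> M n r" unfolding M_def by (rule Max_ge) (use F adm_finite in auto)
  then show ?thesis using F by linarith
qed

lemma M_le:
  assumes "2 \<le> r" "2 * r + 2 < n"
  shows "M n r \<le> real n + real r ^ r"
proof -
  obtain F where F: "F \<in> admissible n r"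
    using construction[OF assms] by blast
  have "M n r \<in> ratio n ` admissible n r" unfolding M_def
    by (rule Max_in) (use F adm_finite in auto)
  then obtain G where G: "G \<in> admissible n r" "M n r = ratio n G" by auto
  show ?thesis unfolding G(2) by (rule upper_ratio[OF _ _ G(1)]) (use assms in auto)
qed

lemma seq_ev: "\<forall>\<^sub>F x in at_top. P x \<Longrightarrow> \<forall>\<^sub>F n in sequentially. P (real n)"
  by (rule eventually_compose_filterlim[OF _ filterlim_real_sequentially])

lemma ev_basic: "\<forall>\<^sub>F n in sequentially. 1 < real n \<and> 1 < ln (ln (real n)) \<and> 2 * ln (real n) + 2 < real n"
proof -
  have "\<forall>\<^sub>F x in at_top. (1::real) < x" by real_asymp
  then have "\<forall>\<^sub>F x in at_top. 1 < x \<and> 1 < ln (ln x) \<and> 2 * ln x + 2 < (x::real)"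
    using ev1 ev2 by eventually_elim auto
  then show ?thesis by (rule seq_ev)
qed

theorem theorem1:
  shows "(\<forall>n r F. 0 < n \<and> 0 < r \<and> F \<in> admissible n r \<longrightarrow>
            ratio n F \<le> real n + real r ^ r)
    \<and> (\<forall>rr :: nat \<Rightarrow> nat. (\<forall>n. 0 < rr n) \<and>
            (\<forall>\<^sub>F n in sequentially. real (rr n) < ln (real n) / ln (ln (real n))) \<longrightarrow>
          (\<forall>\<epsilon>>0. \<forall>\<^sub>F n in sequentially. \<forall>F\<in>admissible n (rr n).
              ratio n F \<le> (1 + \<epsilon>) * real n))
    \<and> (\<forall>n r. 2 \<le> r \<and> 2 * r + 2 < n \<longrightarrow>
          M n r \<ge> real n - 2 * real r + 3
                   - (real n - 2 * real r + 2) / real ((2 * r - 3) choose (r - 2)))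
    \<and> (\<forall>rr :: nat \<Rightarrow> nat. filterlim rr at_top sequentially \<and>
            (\<forall>\<^sub>F n in sequentially. real (rr n) < ln (real n) / ln (ln (real n))) \<longrightarrow>
          ((\<lambda>n. M n (rr n) / real n) \<longlonglongrightarrow> 1))"
proof (intro conjI allI impI)
  fix n r F assume "0 < n \<and> 0 < r \<and> F \<in> admissible n r"
  then show "ratio n F \<le> real n + real r ^ r" using upper_ratio by blast
next
  fix rr :: "nat \<Rightarrow> nat" and \<epsilon> :: real
  assume A: "(\<forall>n. 0 < rr n) \<and> (\<forall>\<^sub>F n in sequentially. real (rr n) < ln (real n) / ln (ln (real n)))"
    and e: "0 < \<epsilon>"
  have "\<forall>\<^sub>F x in at_top. ee x < \<epsilon>" using order_tendstoD(2)[OF ee_lim e] .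
  then have ev3: "\<forall>\<^sub>F n in sequentially. ee (real n) < \<epsilon>" by (rule seq_ev)
  show "\<forall>\<^sub>F n in sequentially. \<forall>F\<in>admissible n (rr n). ratio n F \<le> (1 + \<epsilon>) * real n"
    using ev3 ev_basic conjunct2[OF A]
  proof eventually_elim
    case (elim n)
    show ?case
    proof
      fix F assume F: "F \<in> admissible n (rr n)"
      have "0 < rr n" using A by blast
      then have r1: "1 \<le> real (rr n)" by simp
      have "ratio n F \<le> real n + real (rr n) ^ rr n" using upper_ratio[OF _ _ F] elim \<open>0 < rr n\<close> by auto
      also have "real (rr n) ^ rr n \<le> real n * ee (real n)"
        by (rule rpow_bound) (use elim r1 in auto)
      also have "real n * ee (real n) \<le> real n * \<epsilon>" using elim by (intro mult_left_mono) auto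
      finally show "ratio n F \<le> (1 + \<epsilon>) * real n" by (simp add: algebra_simps)
    qed
  qed
next
  fix n r :: nat assume A: "2 \<le> r \<and> 2 * r + 2 < n"
  have "real n - 2 * real r + 3 \<le> M n r" using M_ge A by blast
  moreover have "0 \<le> (real n - 2 * real r + 2) / real ((2 * r - 3) choose (r - 2))"
    using A by (intro divide_nonneg_nonneg) auto
  ultimately show "M n r \<ge> real n - 2 * real r + 3
                   - (real n - 2 * real r + 2) / real ((2 * r - 3) choose (r - 2))" by linarith
next
  fix rr :: "nat \<Rightarrow> nat"
  assume A: "filterlim rr at_top sequentially \<and>
            (\<forall>\<^sub>F n in sequentially. real (rr n) < ln (real n) / ln (ln (real n)))"
  have r2: "\<forall>\<^sub>F n in sequentially. 2 \<le> rr n" using A unfolding filterlim_at_top by blast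
  have key: "\<forall>\<^sub>F n in sequentially. 1 - 2 * ln (real n) / real n \<le> M n (rr n) / real n \<and>
              M n (rr n) / real n \<le> 1 + ee (real n)"
    using r2 conjunct2[OF A] ev_basic
  proof eventually_elim
    case (elim n)
    define L where "L = ln (real n)"
    have n0: "0 < real n" using elim by simp
    have LL: "1 < ln L" using elim unfolding L_def by simp
    have L0: "0 < L" unfolding L_def using elim by (intro ln_gt_zero) auto
    have L1: "1 < L" using LL L0 ln_le_zero_iff[of L] by linarith
    have "L / ln L < L" using LL L0 L1 by (simp add: divide_less_eq)
    then have rL: "real (rr n) < L" using elim unfolding L_def by linarith
    have "real (2 * rr n + 2) < real n" using rL elim unfolding L_def by simp
    then have nr: "2 * rr n + 2 < n" by (simp only: of_nat_less_iff)
    have lo: "real n - 2 * real (rr n) + 3 \<le> M n (rr n)" by (rule M_ge) (use elim nr in auto)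
    have up: "M n (rr n) \<le> real n + real (rr n) ^ rr n" by (rule M_le) (use elim nr in auto)
    have rb: "real (rr n) ^ rr n \<le> real n * ee (real n)"
      by (rule rpow_bound) (use elim in auto)
    have "1 - 2 * L / real n = (real n - 2 * L) / real n" using n0 by (simp add: field_simps)
    also have "\<dots> \<le> M n (rr n) / real n" using lo rL n0 by (intro divide_right_mono) auto
    finally have g1: "1 - 2 * L / real n \<le> M n (rr n) / real n" .
    have "M n (rr n) / real n \<le> (real n + real n * ee (real n)) / real n"
      using up rb n0 by (intro divide_right_mono) auto
    also have "\<dots> = 1 + ee (real n)" using n0 by (simp add: field_simps)
    finally show ?case using g1 unfolding L_def by simp
  qed
  have f1: "(\<lambda>n. 1 - 2 * ln (real n) / real n) \<longlonglongrightarrow> 1"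
    using filterlim_compose[OF lim_low filterlim_real_sequentially] by simp
  have h1: "(\<lambda>n. 1 + ee (real n)) \<longlonglongrightarrow> 1"
  proof -
    have "(\<lambda>n. ee (real n)) \<longlonglongrightarrow> 0"
      using filterlim_compose[OF ee_lim filterlim_real_sequentially] by simp
    then show ?thesis using tendsto_add[of "\<lambda>n. 1" 1 sequentially "\<lambda>n. ee (real n)" 0] by simp
  qed
  show "(\<lambda>n. M n (rr n) / real n) \<longlonglongrightarrow> 1"
    by (rule tendsto_sandwich[OF _ _ f1 h1]) (use key in \<open>auto elim: eventually_mono\<close>)
qed


end
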